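(* Let $\mathcal L$ be the CNOT circuit on the grid $\{0,\dots,L-1\}^3$ acting on computational basis states by $x_{(c,r,p)}\mapsto\bigoplus_{c'\le c}x_{(c',r,p)}$ (parallel CNOT ladders $\mathrm{CNOT}_{(c',r,p)\to(c'+1,r,p)}$ applied for $c'=0,1,\dots,L-2$ in increasing order). For any two distinct pairs $(r_1,p_1)\ne(r_2,p_2)$, $$\mathcal L^\dagger\,\mathrm{CZ}_{(L-1,r_1,p_1),(L-1,r_2,p_2)}\,\mathcal L=\prod_{c=0}^{L-1}\prod_{c'=0}^{L-1}\mathrm{CZ}_{(c,r_1,p_1),(c',r_2,p_2)}.$$ Consequently, if $m$ is a canonical ordering such that the line $\ell_1=\{(c,r_1,p_1)\}_c$ occupies the ranks $\{k,\dots,k+L-1\}$ and the line $\ell_2=\{(c,r_2,p_2)\}_c$ occupies the ranks $\{k+L,\dots,k+2L-1\}$ for some $k$, then $\mathcal L^\dagger\mathrm{CZ}_{(L-1,r_1,p_1),(L-1,r_2,p_2)}\mathcal L$ maps the JW encoding with ordering $m$ to the JW encoding with ordering $m'$, where $m'(v)=m(v)+L$ for $v\in\ell_1$, $m'(v)=m(v)-L$ for $v\in\ell_2$, and $m'(v)=m(v)$ otherwise.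
   Context: Qubits are indexed by $(c,r,p)\in\{0,\dots,L-1\}^3$, $N=L^3$, with computational-basis bits $x_{(c,r,p)}$; mode $j$ is identified with qubit $j$. A canonical ordering is a bijection $m$ from sites to $\{0,\dots,N-1\}$; the JW encoding with ordering $m$ has Majoranas $\chi^{(m)}_{2j}=X_j\prod_{k:m(k)<m(j)}Z_k$, $\chi^{(m)}_{2j+1}=Y_j\prod_{k:m(k)<m(j)}Z_k$; a unitary $W$ maps the encoding with ordering $m$ to that with $m'$ if $W\chi^{(m)}_aW^\dagger=\chi^{(m')}_a$ for all $a$. $\mathrm{CZ}$ is the controlled-$Z$ gate. *)

theory Defs
  imports Complex_Main
begin

type_synonym site = "nat \<times> nat \<times> nat"
type_synonym bstate = "site \<Rightarrow> bool"
(* an operator on (C^2)^{\<otimes> N} given by its matrix entries <x|A|y> in the computational basis *)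
type_synonym qop = "bstate \<Rightarrow> bstate \<Rightarrow> complex"

definition grid :: "nat \<Rightarrow> site set" where
  "grid L = {0..<L} \<times> {0..<L} \<times> {0..<L}"

definition states :: "nat \<Rightarrow> bstate set" where
  "states L = {x. \<forall>v. x v \<longrightarrow> v \<in> grid L}"

definition op_mult :: "nat \<Rightarrow> qop \<Rightarrow> qop \<Rightarrow> qop" where
  "op_mult L A B = (\<lambda>x y. \<Sum>z\<in>states L. A x z * B z y)"

definition op_id :: "nat \<Rightarrow> qop" where
  "op_id L = (\<lambda>x y. if x \<in> states L \<and> x = y then 1 else 0)"

definition op_adj :: "qop \<Rightarrow> qop" where
  "op_adj A = (\<lambda>x y. cnj (A y x))"

definition op_prod_list :: "nat \<Rightarrow> qop list \<Rightarrow> qop" where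
  "op_prod_list L ops = foldr (op_mult L) ops (op_id L)"

definition diag_op :: "nat \<Rightarrow> (bstate \<Rightarrow> complex) \<Rightarrow> qop" where
  "diag_op L f = (\<lambda>x y. if x \<in> states L \<and> x = y then f x else 0)"

definition flip :: "bstate \<Rightarrow> site \<Rightarrow> bstate" where
  "flip x j = x(j := \<not> x j)"

definition Xop :: "nat \<Rightarrow> site \<Rightarrow> qop" where
  "Xop L j = (\<lambda>x y. if x \<in> states L \<and> y \<in> states L \<and> x = flip y j then 1 else 0)"

(* Y = [[0,-i],[i,0]] *)
definition Yop :: "nat \<Rightarrow> site \<Rightarrow> qop" where
  "Yop L j = (\<lambda>x y. if x \<in> states L \<and> y \<in> states L \<and> x = flip y j
                     then (if y j then - \<i> else \<i>) else 0)"

definition Zop :: "nat \<Rightarrow> site \<Rightarrow> qop" where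
  "Zop L j = diag_op L (\<lambda>x. if x j then -1 else 1)"

definition CZop :: "nat \<Rightarrow> site \<Rightarrow> site \<Rightarrow> qop" where
  "CZop L a b = diag_op L (\<lambda>x. if x a \<and> x b then -1 else 1)"

definition ladder_map :: "nat \<Rightarrow> bstate \<Rightarrow> bstate" where
  "ladder_map L y = (\<lambda>(c,r,p). (c,r,p) \<in> grid L \<and> odd (card {c'. c' \<le> c \<and> y (c',r,p)}))"

definition ladder_op :: "nat \<Rightarrow> qop" where
  "ladder_op L = (\<lambda>x y. if x \<in> states L \<and> y \<in> states L \<and> x = ladder_map L y then 1 else 0)"

definition sites_list :: "nat \<Rightarrow> site list" where
  "sites_list L = [(c,r,p). c \<leftarrow> [0..<L], r \<leftarrow> [0..<L], p \<leftarrow> [0..<L]]"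

definition canonical_ordering :: "nat \<Rightarrow> (site \<Rightarrow> nat) \<Rightarrow> bool" where
  "canonical_ordering L m \<longleftrightarrow> bij_betw m (grid L) {0..<L^3}"

(* Majorana chi_{2j} (b = False) and chi_{2j+1} (b = True) of the JW encoding with ordering m *)
definition jw_maj :: "nat \<Rightarrow> (site \<Rightarrow> nat) \<Rightarrow> site \<Rightarrow> bool \<Rightarrow> qop" where
  "jw_maj L m j b = op_mult L (if b then Yop L j else Xop L j)
      (op_prod_list L (map (Zop L) (filter (\<lambda>k. m k < m j) (sites_list L))))"

definition jw_maps :: "nat \<Rightarrow> qop \<Rightarrow> (site \<Rightarrow> nat) \<Rightarrow> (site \<Rightarrow> nat) \<Rightarrow> bool" where
  "jw_maps L W m m' \<longleftrightarrow>
     (\<forall>j\<in>grid L. \<forall>b. op_mult L (op_mult L W (jw_maj L m j b)) (op_adj W) = jw_maj L m' j b)"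

end

theory Submission
  imports Defs
begin

definition sg :: "bool \<Rightarrow> complex" where "sg P = (if P then -1 else 1)"

lemma sg_mult[simp]: "sg P * sg Q = sg (P \<noteq> Q)" by (simp add: sg_def)
lemma sg_cnj[simp]: "cnj (sg P) = sg P" by (simp add: sg_def)

lemma finite_grid[simp]: "finite (grid L)" by (simp add: grid_def)

lemma states_image: "states L = (\<lambda>S v. v \<in> S) ` Pow (grid L)"
proof
  show "states L \<subseteq> (\<lambda>S v. v \<in> S) ` Pow (grid L)"
  proof
    fix x assume "x \<in> states L"
    then have "{v. x v} \<in> Pow (grid L)" "x = (\<lambda>v. v \<in> {v. x v})" by (auto simp: states_def)
    then show "x \<in> (\<lambda>S v. v \<in> S) ` Pow (grid L)" by blast
  qed
qed (auto simp: states_def)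

lemma finite_states[simp]: "finite (states L)" by (simp add: states_image)

lemma op_mult_diag_left: "op_mult L (diag_op L f) A = (\<lambda>x y. if x \<in> states L then f x * A x y else 0)"
proof (intro ext)
  fix x y
  have "op_mult L (diag_op L f) A x y = (\<Sum>z\<in>states L. if z = x then (if x \<in> states L then f x * A x y else 0) else 0)"
    unfolding op_mult_def diag_op_def by (intro sum.cong) auto
  then show "op_mult L (diag_op L f) A x y = (if x \<in> states L then f x * A x y else 0)"
    by (simp add: sum.delta')
qed

lemma op_mult_diag_right: "op_mult L A (diag_op L f) = (\<lambda>x y. if y \<in> states L then A x y * f y else 0)"
proof (intro ext)
  fix x y
  have "op_mult L A (diag_op L f) x y = (\<Sum>z\<in>states L. if z = y then (if y \<in> states L then A x y * f y else 0) else 0)"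
    unfolding op_mult_def diag_op_def by (intro sum.cong) auto
  then show "op_mult L A (diag_op L f) x y = (if y \<in> states L then A x y * f y else 0)"
    by (simp add: sum.delta')
qed

lemma diag_mult: "op_mult L (diag_op L f) (diag_op L g) = diag_op L (\<lambda>x. f x * g x)"
  unfolding op_mult_diag_left by (auto simp: diag_op_def intro!: ext)

lemma op_id_diag: "op_id L = diag_op L (\<lambda>_. 1)"
  by (simp add: op_id_def diag_op_def)

lemma op_prod_list_diag:
  "op_prod_list L (map (\<lambda>i. diag_op L (g i)) xs) = diag_op L (\<lambda>x. prod_list (map (\<lambda>i. g i x) xs))"
  by (induction xs) (simp_all add: op_prod_list_def op_id_diag diag_mult)

lemma diag_cong: "(\<And>x. x \<in> states L \<Longrightarrow> f x = g x) \<Longrightarrow> diag_op L f = diag_op L g"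
  by (auto simp: diag_op_def intro!: ext)

lemma adj_diag: "op_adj (diag_op L f) = diag_op L (\<lambda>x. cnj (f x))"
  by (auto simp: op_adj_def diag_op_def intro!: ext)

lemma prod_sg: "finite S \<Longrightarrow> (\<Prod>k\<in>S. sg (Q k)) = sg (odd (card {k\<in>S. Q k}))"
proof (induction S rule: finite_induct)
  case empty then show ?case by (simp add: sg_def)
next
  case (insert a S)
  have fin: "finite {k\<in>S. Q k}" using insert by simp
  have "{k\<in>insert a S. Q k} = (if Q a then insert a {k\<in>S. Q k} else {k\<in>S. Q k})" by auto
  then show ?case using insert fin by (simp add: card_insert_if)
qed

lemma lm_states: "ladder_map L y \<in> states L"
  by (auto simp: states_def ladder_map_def split: prod.splits)

lemma adj_ladder_mult: "op_mult L (op_adj (ladder_op L)) B = (\<lambda>x y. if x \<in> states L then B (ladder_map L x) y else 0)"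
proof (intro ext)
  fix x y
  have "op_mult L (op_adj (ladder_op L)) B x y = (\<Sum>z\<in>states L. if z = ladder_map L x then (if x \<in> states L then B (ladder_map L x) y else 0) else 0)"
    unfolding op_mult_def op_adj_def ladder_op_def by (intro sum.cong) auto
  then show "op_mult L (op_adj (ladder_op L)) B x y = (if x \<in> states L then B (ladder_map L x) y else 0)"
    by (simp add: sum.delta' lm_states)
qed

lemma mult_ladder: "op_mult L B (ladder_op L) = (\<lambda>x y. if y \<in> states L then B x (ladder_map L y) else 0)"
proof (intro ext)
  fix x y
  have "op_mult L B (ladder_op L) x y = (\<Sum>z\<in>states L. if z = ladder_map L y then (if y \<in> states L then B x (ladder_map L y) else 0) else 0)"
    unfolding op_mult_def ladder_op_def by (intro sum.cong) auto
  then show "op_mult L B (ladder_op L) x y = (if y \<in> states L then B x (ladder_map L y) else 0)"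
    by (simp add: sum.delta' lm_states)
qed

definition pref :: "bstate \<Rightarrow> nat \<Rightarrow> nat \<Rightarrow> nat \<Rightarrow> nat set" where
  "pref x r p c = {c'. c' \<le> c \<and> x (c',r,p)}"

lemma pref_fin[simp]: "finite (pref x r p c)"
  by (simp add: pref_def)

lemma pref_Suc: "pref x r p (Suc d) = (if x (Suc d, r, p) then insert (Suc d) (pref x r p d) else pref x r p d)"
  by (auto simp: pref_def le_Suc_eq)

lemma pref_notin: "Suc d \<notin> pref x r p d"
  by (simp add: pref_def)

lemma pref_0: "pref x r p 0 = (if x (0, r, p) then {0} else {})"
  by (auto simp: pref_def)

lemma lm_pref: "ladder_map L x (c,r,p) = ((c,r,p) \<in> grid L \<and> odd (card (pref x r p c)))"
  by (simp add: ladder_map_def pref_def)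

lemma lm_inj:
  assumes x: "x \<in> states L" and y: "y \<in> states L" and eq: "ladder_map L x = ladder_map L y"
  shows "x = y"
proof (intro ext)
  fix v :: site
  obtain c r p where v: "v = (c,r,p)" by (cases v) auto
  show "x v = y v"
  proof (cases "v \<in> grid L")
    case False
    have "\<not> x v" "\<not> y v" using x y False unfolding states_def by blast+
    then show ?thesis by simp
  next
    case True
    then have rp: "r < L" "p < L" "c < L" using v by (auto simp: grid_def)
    have "\<forall>c. c < L \<longrightarrow> pref x r p c = pref y r p c"
    proof
      fix c show "c < L \<longrightarrow> pref x r p c = pref y r p c"
      proof (induction c)
        case 0
        have "ladder_map L x (0,r,p) = ladder_map L y (0,r,p)" using eq by simp
        then have "x (0,r,p) = y (0,r,p)" using rp by (simp add: lm_pref grid_def pref_0 split: if_splits)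
        then show ?case by (simp add: pref_0)
      next
        case (Suc d)
        show ?case
        proof
          assume d: "Suc d < L"
          then have IH: "pref x r p d = pref y r p d" using Suc by simp
          have "ladder_map L x (Suc d,r,p) = ladder_map L y (Suc d,r,p)" using eq by simp
          then have "odd (card (pref x r p (Suc d))) = odd (card (pref y r p (Suc d)))"
            using rp d by (simp add: lm_pref grid_def)
          then have "x (Suc d,r,p) = y (Suc d,r,p)"
            using IH by (simp add: pref_Suc card_insert_if pref_notin split: if_splits)
          then show "pref x r p (Suc d) = pref y r p (Suc d)" using IH by (simp add: pref_Suc)
        qed
      qed
    qed
    then have "pref x r p c = pref y r p c" using rp by simp
    then show ?thesis using v by (auto simp: pref_def)
  qed
qed

lemma conj_ladder_diag:
  "op_mult L (op_mult L (op_adj (ladder_op L)) (diag_op L f)) (ladder_op L) = diag_op L (\<lambda>x. f (ladder_map L x))"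
  unfolding adj_ladder_mult mult_ladder
  by (auto simp: diag_op_def lm_states intro!: ext dest: lm_inj)

lemma sites_list_eq: "sites_list L = List.product [0..<L] (List.product [0..<L] [0..<L])"
  by (simp add: sites_list_def product_concat_map map_concat comp_def)

lemma sites_distinct: "distinct (sites_list L)"
  by (simp add: sites_list_eq distinct_product)

lemma sites_set: "set (sites_list L) = grid L"
  by (simp add: sites_list_eq grid_def atLeast0LessThan)

definition cnt :: "nat \<Rightarrow> bstate \<Rightarrow> nat \<Rightarrow> nat \<Rightarrow> nat" where
  "cnt L x r p = card {c. c < L \<and> x (c,r,p)}"

lemma CZ_diag: "CZop L a b = diag_op L (\<lambda>x. sg (x a \<and> x b))"
  by (simp add: CZop_def sg_def)

lemma Z_diag: "Zop L a = diag_op L (\<lambda>x. sg (x a))"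
  by (simp add: Zop_def sg_def)

lemma part1_lhs:
  assumes "r1 < L" "p1 < L" "r2 < L" "p2 < L"
  shows "op_mult L (op_mult L (op_adj (ladder_op L)) (CZop L (L - 1, r1, p1) (L - 1, r2, p2))) (ladder_op L)
     = diag_op L (\<lambda>x. sg (odd (cnt L x r1 p1) \<and> odd (cnt L x r2 p2)))"
proof -
  have L: "L > 0" using assms by simp
  have pe: "pref x r p (L - Suc 0) = {c. c < L \<and> x (c,r,p)}" for x r p
    using L by (auto simp: pref_def)
  show ?thesis unfolding CZ_diag conj_ladder_diag
    by (rule diag_cong) (use assms L in \<open>simp add: lm_pref pe cnt_def grid_def\<close>)
qed

lemma part1_rhs:
  shows "op_prod_list L [CZop L (c, r1, p1) (c', r2, p2). c \<leftarrow> [0..<L], c' \<leftarrow> [0..<L]]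
     = diag_op L (\<lambda>x. sg (odd (cnt L x r1 p1) \<and> odd (cnt L x r2 p2)))"
proof -
  define g :: "nat \<times> nat \<Rightarrow> bstate \<Rightarrow> complex" where "g = (\<lambda>(c,c') x. sg (x (c,r1,p1) \<and> x (c',r2,p2)))"
  have "[CZop L (c, r1, p1) (c', r2, p2). c \<leftarrow> [0..<L], c' \<leftarrow> [0..<L]]
      = map (\<lambda>i. diag_op L (g i)) (List.product [0..<L] [0..<L])"
    by (simp add: product_concat_map map_concat comp_def CZ_diag g_def)
  then have "op_prod_list L [CZop L (c, r1, p1) (c', r2, p2). c \<leftarrow> [0..<L], c' \<leftarrow> [0..<L]]
     = diag_op L (\<lambda>x. prod_list (map (\<lambda>i. g i x) (List.product [0..<L] [0..<L])))"
    by (simp add: op_prod_list_diag)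
  also have "\<dots> = diag_op L (\<lambda>x. sg (odd (cnt L x r1 p1) \<and> odd (cnt L x r2 p2)))"
  proof (rule diag_cong)
    fix x
    have "prod_list (map (\<lambda>i. g i x) (List.product [0..<L] [0..<L]))
        = (\<Prod>i\<in>{0..<L} \<times> {0..<L}. g i x)"
      by (subst prod.distinct_set_conv_list[symmetric]) (auto simp: distinct_product)
    also have "\<dots> = (\<Prod>i\<in>{0..<L} \<times> {0..<L}. sg ((\<lambda>(c,c'). x (c,r1,p1) \<and> x (c',r2,p2)) i))"
      by (rule prod.cong) (auto simp: g_def)
    also have "\<dots> = sg (odd (card {i\<in>{0..<L} \<times> {0..<L}. (\<lambda>(c,c'). x (c,r1,p1) \<and> x (c',r2,p2)) i}))"
      by (rule prod_sg) simp
    also have "{i\<in>{0..<L} \<times> {0..<L}. (\<lambda>(c,c'). x (c,r1,p1) \<and> x (c',r2,p2)) i}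
       = {c. c < L \<and> x (c,r1,p1)} \<times> {c. c < L \<and> x (c,r2,p2)}" by auto
    finally show "prod_list (map (\<lambda>i. g i x) (List.product [0..<L] [0..<L])) = sg (odd (cnt L x r1 p1) \<and> odd (cnt L x r2 p2))"
      by (simp add: cnt_def card_cartesian_product)
  qed
  finally show ?thesis .
qed

lemma prod_list_sg_filter:
  "prod_list (map (\<lambda>k. sg (x k)) (filter P (sites_list L))) = sg (odd (card {k\<in>grid L. P k \<and> x k}))"
proof -
  have "prod_list (map (\<lambda>k. sg (x k)) (filter P (sites_list L))) = (\<Prod>k\<in>set (filter P (sites_list L)). sg (x k))"
    by (subst prod.distinct_set_conv_list[symmetric]) (auto simp: sites_distinct)
  also have "\<dots> = sg (odd (card {k\<in>set (filter P (sites_list L)). x k}))"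
    by (rule prod_sg) simp
  also have "{k\<in>set (filter P (sites_list L)). x k} = {k\<in>grid L. P k \<and> x k}"
    by (auto simp: sites_set)
  finally show ?thesis .
qed

lemma jw_form:
  "jw_maj L m j b = (\<lambda>x y. if x \<in> states L \<and> y \<in> states L \<and> x = flip y j
      then (if b then (if y j then - \<i> else \<i>) else 1) * sg (odd (card {k\<in>grid L. m k < m j \<and> y k})) else 0)"
proof -
  have "op_prod_list L (map (Zop L) (filter (\<lambda>k. m k < m j) (sites_list L)))
     = diag_op L (\<lambda>x. sg (odd (card {k\<in>grid L. m k < m j \<and> x k})))"
    using op_prod_list_diag[of L "\<lambda>k x. sg (x k)" "filter (\<lambda>k. m k < m j) (sites_list L)"]
    by (simp add: Z_diag[abs_def] prod_list_sg_filter)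
  then show ?thesis unfolding jw_maj_def
    by (auto simp: op_mult_diag_right Xop_def Yop_def intro!: ext)
qed

lemma conj_diag:
  "op_mult L (op_mult L (diag_op L w) A) (op_adj (diag_op L w))
    = (\<lambda>x y. if x \<in> states L \<and> y \<in> states L then w x * A x y * cnj (w y) else 0)"
  by (auto simp: adj_diag op_mult_diag_left op_mult_diag_right intro!: ext)

lemma order_cases:
  fixes mk mj K L :: nat
  assumes "k1 \<Longrightarrow> K \<le> mk \<and> mk < K+L" "k2 \<Longrightarrow> K+L \<le> mk \<and> mk < K+2*L"
    "\<not>k1 \<Longrightarrow> \<not>k2 \<Longrightarrow> mk < K \<or> K+2*L \<le> mk"
    "j1 \<Longrightarrow> K \<le> mj \<and> mj < K+L" "j2 \<Longrightarrow> K+L \<le> mj \<and> mj < K+2*L"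
    "\<not>j1 \<Longrightarrow> \<not>j2 \<Longrightarrow> mj < K \<or> K+2*L \<le> mj"
    "\<not>(k1 \<and> k2)" "\<not>(j1 \<and> j2)"
  shows "((if k1 then mk+L else if k2 then mk-L else mk) < (if j1 then mj+L else if j2 then mj - L else mj))
     = (if j1 then mk<mj \<or> k2 else if j2 then mk<mj \<and> \<not>k1 else mk<mj)"
  using assms by (cases k1; cases k2; cases j1; cases j2) auto

lemma cnt_flip_other: "(\<And>c. c < L \<Longrightarrow> j \<noteq> (c,r,p)) \<Longrightarrow> cnt L (flip y j) r p = cnt L y r p"
  unfolding cnt_def flip_def by (rule arg_cong[where f=card]) auto

lemma cnt_flip_same:
  assumes "c0 < L"
  shows "odd (cnt L (flip y (c0,r,p)) r p) = (\<not> odd (cnt L y r p))"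
proof -
  define A where "A = {c. c < L \<and> y (c,r,p)}"
  have fA: "finite A" by (simp add: A_def)
  have "{c. c < L \<and> flip y (c0,r,p) (c,r,p)} = (if y (c0,r,p) then A - {c0} else insert c0 A)"
    using assms by (auto simp: A_def flip_def)
  moreover have "y (c0,r,p) \<Longrightarrow> c0 \<in> A" "\<not> y (c0,r,p) \<Longrightarrow> c0 \<notin> A" using assms by (auto simp: A_def)
  ultimately show ?thesis using fA unfolding cnt_def A_def[symmetric]
    by (cases "y (c0,r,p)") (auto simp: card_Diff_singleton card_insert_disjoint card_gt_0_iff[symmetric]
         dest: card_gt_0_iff[THEN iffD2])
qed

lemma cnt_line: "cnt L y r p = card {v\<in>grid L. v \<in> {(c, r, p) | c. c < L} \<and> y v}"
  if "r < L" "p < L" for r p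
proof -
  have "{v\<in>grid L. v \<in> {(c, r, p) | c. c < L} \<and> y v} = (\<lambda>c. (c,r,p)) ` {c. c < L \<and> y (c,r,p)}"
    using that by (auto simp: grid_def)
  moreover have "inj_on (\<lambda>c. (c,r,p)) {c. c < L \<and> y (c,r,p)}" by (auto simp: inj_on_def)
  ultimately show ?thesis by (simp add: cnt_def card_image)
qed

lemma part2:
  fixes L r1 p1 r2 p2 K :: nat and m :: "site \<Rightarrow> nat"
  assumes rp: "r1 < L" "p1 < L" "r2 < L" "p2 < L" "(r1, p1) \<noteq> (r2, p2)"
    and cm: "canonical_ordering L m"
    and i1: "m ` {(c, r1, p1) | c. c < L} = {K..<K + L}"
    and i2: "m ` {(c, r2, p2) | c. c < L} = {K + L..<K + 2 * L}"
  shows "jw_maps L (diag_op L (\<lambda>x. sg (odd (cnt L x r1 p1) \<and> odd (cnt L x r2 p2)))) m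
      (\<lambda>v. if v \<in> {(c, r1, p1) | c. c < L} then m v + L
           else if v \<in> {(c, r2, p2) | c. c < L} then m v - L
           else m v)"
proof -
  define l1 where "l1 = {(c, r1, p1) | c. c < L}"
  define l2 where "l2 = {(c, r2, p2) | c. c < L}"
  define m' where "m' = (\<lambda>v. if v \<in> l1 then m v + L else if v \<in> l2 then m v - L else m v)"
  define w where "w = (\<lambda>x. sg (odd (cnt L x r1 p1) \<and> odd (cnt L x r2 p2)))"
  have inj: "inj_on m (grid L)" using cm by (simp add: canonical_ordering_def bij_betw_def)
  have l1g: "l1 \<subseteq> grid L" and l2g: "l2 \<subseteq> grid L" using rp by (auto simp: l1_def l2_def grid_def)
  have disj: "\<not> (v \<in> l1 \<and> v \<in> l2)" for v using rp(5) by (auto simp: l1_def l2_def)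
  have F1: "v \<in> l1 \<Longrightarrow> K \<le> m v \<and> m v < K + L" for v using i1 unfolding l1_def[symmetric] by auto
  have F2: "v \<in> l2 \<Longrightarrow> K + L \<le> m v \<and> m v < K + 2*L" for v using i2 unfolding l2_def[symmetric] by auto
  have F3: "m v < K \<or> K + 2*L \<le> m v" if v: "v \<in> grid L" "v \<notin> l1" "v \<notin> l2" for v
  proof (rule ccontr)
    assume "\<not> (m v < K \<or> K + 2*L \<le> m v)"
    then have "m v \<in> {K..<K + L} \<or> m v \<in> {K + L..<K + 2 * L}" by auto
    then obtain u where "u \<in> l1 \<union> l2" "m u = m v" using i1 i2 unfolding l1_def[symmetric] l2_def[symmetric]
      by (metis UnI1 UnI2 imageE)
    then have "u = v" using inj l1g l2g v(1) by (meson Un_least inj_onD subsetD)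
    then show False using \<open>u \<in> l1 \<union> l2\<close> v by auto
  qed
  have ord: "(m' k < m' j) = (if j \<in> l1 then m k < m j \<or> k \<in> l2 else if j \<in> l2 then m k < m j \<and> k \<notin> l1 else m k < m j)"
    if "k \<in> grid L" "j \<in> grid L" for k j
    unfolding m'_def
    by (rule order_cases[where K=K and L=L]) (use F1 F2 F3 disj that in auto)
  have key: "w (flip y j) * w y * sg (odd (card {k\<in>grid L. m k < m j \<and> y k}))
      = sg (odd (card {k\<in>grid L. m' k < m' j \<and> y k}))" if j: "j \<in> grid L" for y j
  proof -
    define T where "T = {k\<in>grid L. m k < m j \<and> y k}"
    define T' where "T' = {k\<in>grid L. m' k < m' j \<and> y k}"
    define Y1 where "Y1 = {k\<in>grid L. k \<in> l1 \<and> y k}"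
    define Y2 where "Y2 = {k\<in>grid L. k \<in> l2 \<and> y k}"
    have c1: "cnt L y r1 p1 = card Y1" unfolding Y1_def l1_def using rp by (simp add: cnt_line)
    have c2: "cnt L y r2 p2 = card Y2" unfolding Y2_def l2_def using rp by (simp add: cnt_line)
    have fin: "finite T" "finite T'" "finite Y1" "finite Y2" by (simp_all add: T_def T'_def Y1_def Y2_def)
    show ?thesis
    proof (cases "j \<in> l1")
      case True
      then obtain c0 where c0: "j = (c0, r1, p1)" "c0 < L" by (auto simp: l1_def)
      have a: "odd (cnt L (flip y j) r1 p1) = (\<not> odd (cnt L y r1 p1))" using c0 cnt_flip_same by simp
      have b: "cnt L (flip y j) r2 p2 = cnt L y r2 p2" using c0 rp(5) by (intro cnt_flip_other) auto
      have o1: "k \<in> grid L \<Longrightarrow> (m' k < m' j) = (m k < m j \<or> k \<in> l2)" for k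
        using ord[OF _ j] True by simp
      have o2: "k \<in> l2 \<Longrightarrow> \<not> m k < m j" for k using F2[of k] F1[of j] True by simp
      have "T' = T \<union> Y2" by (auto simp: T_def T'_def Y2_def o1)
      moreover have "T \<inter> Y2 = {}" using o2 by (auto simp: T_def Y2_def)
      ultimately have "card T' = card T + card Y2" using fin by (simp add: card_Un_disjoint)
      then show ?thesis unfolding T_def[symmetric] T'_def[symmetric] w_def a b c2
        by (cases "odd (cnt L y r1 p1)"; cases "odd (card Y2)") auto
    next
      case False
      note nl1 = False
      show ?thesis
      proof (cases "j \<in> l2")
        case True
        then obtain c0 where c0: "j = (c0, r2, p2)" "c0 < L" by (auto simp: l2_def)
        have a: "odd (cnt L (flip y j) r2 p2) = (\<not> odd (cnt L y r2 p2))" using c0 cnt_flip_same by simp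
        have b: "cnt L (flip y j) r1 p1 = cnt L y r1 p1" using c0 rp(5) by (intro cnt_flip_other) auto
        have o1: "k \<in> grid L \<Longrightarrow> (m' k < m' j) = (m k < m j \<and> k \<notin> l1)" for k
          using ord[OF _ j] True nl1 by simp
        have o2: "k \<in> l1 \<Longrightarrow> m k < m j" for k using F1[of k] F2[of j] True by simp
        have "T = T' \<union> Y1" using o2 by (auto simp: T_def T'_def Y1_def o1)
        moreover have "T' \<inter> Y1 = {}" by (auto simp: T'_def Y1_def o1)
        ultimately have "card T = card T' + card Y1" using fin by (simp add: card_Un_disjoint)
        then show ?thesis unfolding T_def[symmetric] T'_def[symmetric] w_def a b c1
          by (cases "odd (card Y1)"; cases "odd (cnt L y r2 p2)") auto
      next
        case False
        have a: "cnt L (flip y j) r1 p1 = cnt L y r1 p1" using nl1 by (intro cnt_flip_other) (auto simp: l1_def)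
        have b: "cnt L (flip y j) r2 p2 = cnt L y r2 p2" using False by (intro cnt_flip_other) (auto simp: l2_def)
        have o1: "k \<in> grid L \<Longrightarrow> (m' k < m' j) = (m k < m j)" for k
          using ord[OF _ j] False nl1 by simp
        have "T' = T" by (auto simp: T_def T'_def o1)
        then show ?thesis unfolding T_def[symmetric] T'_def[symmetric] w_def a b
          by (cases "odd (cnt L y r1 p1) \<and> odd (cnt L y r2 p2)") auto
      qed
    qed
  qed
  show ?thesis
    unfolding jw_maps_def l1_def[symmetric] l2_def[symmetric] m'_def[symmetric] w_def[symmetric]
  proof (intro ballI allI)
    fix j b assume j: "j \<in> grid L"
    show "op_mult L (op_mult L (diag_op L w) (jw_maj L m j b)) (op_adj (diag_op L w)) = jw_maj L m' j b"
      unfolding conj_diag jw_form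
    proof (intro ext)
      fix x y
      have cw: "cnj (w y) = w y" by (simp add: w_def)
      show "(if x \<in> states L \<and> y \<in> states L then w x * (if x \<in> states L \<and> y \<in> states L \<and> x = flip y j
               then (if b then if y j then - \<i> else \<i> else 1) * sg (odd (card {k \<in> grid L. m k < m j \<and> y k})) else 0) * cnj (w y) else 0) =
            (if x \<in> states L \<and> y \<in> states L \<and> x = flip y j
               then (if b then if y j then - \<i> else \<i> else 1) * sg (odd (card {k \<in> grid L. m' k < m' j \<and> y k})) else 0)"
        using key[OF j, of y, symmetric] cw by (auto simp: mult_ac)
    qed
  qed
qed

theorem mainTheorem11:
  fixes L r1 p1 r2 p2 :: nat
  assumes "r1 < L" "p1 < L" "r2 < L" "p2 < L" "(r1, p1) \<noteq> (r2, p2)"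
  shows "op_mult L (op_mult L (op_adj (ladder_op L)) (CZop L (L - 1, r1, p1) (L - 1, r2, p2)))
             (ladder_op L)
         = op_prod_list L [CZop L (c, r1, p1) (c', r2, p2). c \<leftarrow> [0..<L], c' \<leftarrow> [0..<L]]
       \<and> (\<forall>m k. canonical_ordering L m
            \<longrightarrow> m ` {(c, r1, p1) | c. c < L} = {k..<k + L}
            \<longrightarrow> m ` {(c, r2, p2) | c. c < L} = {k + L..<k + 2 * L}
            \<longrightarrow> jw_maps L
                  (op_mult L (op_mult L (op_adj (ladder_op L)) (CZop L (L - 1, r1, p1) (L - 1, r2, p2)))
                     (ladder_op L))
                  m
                  (\<lambda>v. if v \<in> {(c, r1, p1) | c. c < L} then m v + L
                       else if v \<in> {(c, r2, p2) | c. c < L} then m v - L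
                       else m v))"
proof
  show "op_mult L (op_mult L (op_adj (ladder_op L)) (CZop L (L - 1, r1, p1) (L - 1, r2, p2))) (ladder_op L)
         = op_prod_list L [CZop L (c, r1, p1) (c', r2, p2). c \<leftarrow> [0..<L], c' \<leftarrow> [0..<L]]"
    using part1_lhs[OF assms(1-4)] part1_rhs by simp
next
  show "\<forall>m k. canonical_ordering L m
            \<longrightarrow> m ` {(c, r1, p1) | c. c < L} = {k..<k + L}
            \<longrightarrow> m ` {(c, r2, p2) | c. c < L} = {k + L..<k + 2 * L}
            \<longrightarrow> jw_maps L
                  (op_mult L (op_mult L (op_adj (ladder_op L)) (CZop L (L - 1, r1, p1) (L - 1, r2, p2)))
                     (ladder_op L))
                  m
                  (\<lambda>v. if v \<in> {(c, r1, p1) | c. c < L} then m v + L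
                       else if v \<in> {(c, r2, p2) | c. c < L} then m v - L
                       else m v)"
    unfolding part1_lhs[OF assms(1-4)] using part2[OF assms] by blast
qed

end
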